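(* Let $s \geq 3$ and $n \geq 2^{40s}$ be integers and let $\rho = (8s/n)^{2/s}$. Let $\chi$ be a coloring of an $n$-element set $Y$ with $s$ colors whose color classes $Y_1,\dots,Y_s$ each have size at least $n/(2s)$. Let $G_{n,\rho}(\chi)$ be the random graph obtained by including each edge of the complete $s$-partite graph with parts $Y_1,\dots,Y_s$ independently with probability $\rho$. Then $$\Pr\bigl(K_s \not\subseteq G_{n,\rho}(\chi)\bigr) \leq \exp\bigl(-2^{2s-4}n\bigr).$$
   Context: $K_s$ denotes the complete graph on $s$ vertices; $K_s \not\subseteq G$ means $G$ contains no copy of $K_s$. *)

theory Defs
  imports "HOL-Probability.Probability"
begin

text \<open>Graphs on vertex type 'a are given by their edge sets: sets of 2-element sets.\<close>

definition partite_edges :: "'a set \<Rightarrow> ('a \<Rightarrow> nat) \<Rightarrow> 'a set set" where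
  "partite_edges Y chi = {{u, v} | u v. u \<in> Y \<and> v \<in> Y \<and> chi u \<noteq> chi v}"

definition contains_clique :: "'a set set \<Rightarrow> nat \<Rightarrow> bool" where
  "contains_clique H s \<longleftrightarrow>
     (\<exists>K. finite K \<and> card K = s \<and> (\<forall>u\<in>K. \<forall>v\<in>K. u \<noteq> v \<longrightarrow> {u, v} \<in> H))"

text \<open>The random graph G_{n,rho}(chi): each edge of the complete s-partite graph is
kept independently with probability rho. A sample is the indicator function of
the kept edges.\<close>
definition random_partite_graph :: "'a set \<Rightarrow> ('a \<Rightarrow> nat) \<Rightarrow> real \<Rightarrow> ('a set \<Rightarrow> bool) pmf" where
  "random_partite_graph Y chi \<rho> = Pi_pmf (partite_edges Y chi) False (\<lambda>_. bernoulli_pmf \<rho>)"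

end

theory Submission
  imports Defs
begin

definition up :: "'e set \<Rightarrow> ('e \<Rightarrow> bool) set" where
  "up T = {f. \<forall>e\<in>T. f e}"

lemma prob_pair_times:
  "measure_pmf.prob (pair_pmf M N) (A \<times> B) = measure_pmf.prob M A * measure_pmf.prob N B"
proof -
  have "measure_pmf.prob (pair_pmf M N) (A \<times> B) = measure_pmf.prob (pair_pmf M N) ((A \<times> B) \<inter> set_pmf (pair_pmf M N))"
    by (rule sym, rule measure_Int_set_pmf)
  also have "(A \<times> B) \<inter> set_pmf (pair_pmf M N) = (A \<inter> set_pmf M) \<times> (B \<inter> set_pmf N)"
    by auto
  also have "measure_pmf.prob (pair_pmf M N) \<dots> = measure_pmf.prob M (A \<inter> set_pmf M) * measure_pmf.prob N (B \<inter> set_pmf N)"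
    by (rule measure_pmf_prob_product) (auto intro: countable_subset)
  finally show ?thesis by (simp add: measure_Int_set_pmf)
qed

lemma prob_up:
  assumes "finite E" "T \<subseteq> E" "0 \<le> \<rho>" "\<rho> \<le> 1"
  shows "measure_pmf.prob (Pi_pmf E False (\<lambda>_. bernoulli_pmf \<rho>)) (up T) = \<rho> ^ card T"
proof -
  have "up T = Pi E (\<lambda>e. if e \<in> T then {True} else UNIV)"
    using assms(2) by (auto simp: up_def Pi_def)
  hence "measure_pmf.prob (Pi_pmf E False (\<lambda>_. bernoulli_pmf \<rho>)) (up T)
      = (\<Prod>e\<in>E. measure_pmf.prob (bernoulli_pmf \<rho>) (if e \<in> T then {True} else UNIV))"
    using assms(1) by (simp add: measure_Pi_pmf_Pi)
  also have "\<dots> = (\<Prod>e\<in>E. if e \<in> T then \<rho> else 1)"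
    using assms(3,4) by (intro prod.cong) (auto simp: measure_pmf_single)
  also have "\<dots> = (\<Prod>e\<in>{e\<in>E. e \<in> T}. \<rho>)"
    using assms(1) by (rule prod.inter_filter[symmetric])
  also have "{e\<in>E. e \<in> T} = T" using assms(2) by auto
  finally show ?thesis by simp
qed

lemma prob_up_indep:
  assumes "finite E" "T \<subseteq> E"
    and inv: "\<And>f g. (\<And>x. x \<notin> T \<Longrightarrow> f x = g x) \<Longrightarrow> f \<in> D \<longleftrightarrow> g \<in> D"
  shows "measure_pmf.prob (Pi_pmf E False p) (up T \<inter> D)
       = measure_pmf.prob (Pi_pmf E False p) (up T) * measure_pmf.prob (Pi_pmf E False p) D"
proof -
  define mrg where "mrg = (\<lambda>(f::'a\<Rightarrow>bool,g::'a\<Rightarrow>bool) x. if x \<in> T then f x else g x)"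
  have fT: "finite T" using assms(1,2) finite_subset by blast
  have E: "E = T \<union> (E - T)" using assms(2) by auto
  have Om: "Pi_pmf E False p = map_pmf mrg (pair_pmf (Pi_pmf T False p) (Pi_pmf (E - T) False p))"
    unfolding mrg_def by (subst E, rule Pi_pmf_union) (use assms fT in auto)
  have key: "mrg (f, g) \<in> D \<longleftrightarrow> g \<in> D" for f g
    by (rule inv) (auto simp: mrg_def)
  have up: "mrg (f, g) \<in> up T \<longleftrightarrow> f \<in> up T" for f g
    by (auto simp: mrg_def up_def)
  have 1: "mrg -` (up T \<inter> D) = up T \<times> D" using key up by auto
  have 2: "mrg -` (up T) = up T \<times> UNIV" using up by auto
  have 3: "mrg -` D = UNIV \<times> D" using key by auto
  show ?thesis unfolding Om measure_map_pmf 1 2 3 prob_pair_times by simp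
qed

lemma prob_up_harris:
  assumes "finite E" "T \<subseteq> E"
    and dec: "\<And>f g. f \<in> D \<Longrightarrow> (\<And>x. g x \<Longrightarrow> f x) \<Longrightarrow> g \<in> D"
  shows "measure_pmf.prob (Pi_pmf E False p) (up T \<inter> D)
       \<le> measure_pmf.prob (Pi_pmf E False p) (up T) * measure_pmf.prob (Pi_pmf E False p) D"
proof -
  define D' where "D' = {f. (\<lambda>x. if x \<in> T then True else f x) \<in> D}"
  have eq: "up T \<inter> D = up T \<inter> D'"
  proof (intro set_eqI iffI)
    fix f assume f: "f \<in> up T \<inter> D"
    have "(\<lambda>x. if x \<in> T then True else f x) = f" using f by (auto simp: up_def)
    thus "f \<in> up T \<inter> D'" using f unfolding D'_def by simp
  next
    fix f assume f: "f \<in> up T \<inter> D'"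
    have "(\<lambda>x. if x \<in> T then True else f x) = f" using f by (auto simp: up_def)
    thus "f \<in> up T \<inter> D" using f unfolding D'_def by simp
  qed
  have inv: "f \<in> D' \<longleftrightarrow> g \<in> D'" if "\<And>x. x \<notin> T \<Longrightarrow> f x = g x" for f g
  proof -
    have "(\<lambda>x. if x \<in> T then True else f x) = (\<lambda>x. if x \<in> T then True else g x)"
      using that by auto
    thus ?thesis unfolding D'_def by simp
  qed
  have sub: "D' \<subseteq> D"
    unfolding D'_def by (auto elim!: dec)
  have "measure_pmf.prob (Pi_pmf E False p) (up T \<inter> D)
      = measure_pmf.prob (Pi_pmf E False p) (up T) * measure_pmf.prob (Pi_pmf E False p) D'"
    unfolding eq by (rule prob_up_indep[OF assms(1,2)]) (rule inv, blast)
  also have "\<dots> \<le> measure_pmf.prob (Pi_pmf E False p) (up T) * measure_pmf.prob (Pi_pmf E False p) D"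
    by (intro mult_left_mono measure_pmf.finite_measure_mono sub) auto
  finally show ?thesis .
qed


lemma janson_nat:
  fixes S :: "nat \<Rightarrow> 'e set"
  assumes E: "finite E" and SE: "\<And>i. S i \<subseteq> E"
  shows "measure_pmf.prob (Pi_pmf E False p) {f. \<forall>j<m. f \<notin> up (S j)}
    \<le> exp (- (\<Sum>i<m. measure_pmf.prob (Pi_pmf E False p) (up (S i)))
          + (\<Sum>i<m. \<Sum>j\<in>{j. j < i \<and> S i \<inter> S j \<noteq> {}}.
               measure_pmf.prob (Pi_pmf E False p) (up (S i) \<inter> up (S j))))"
proof (induction m)
  case 0
  show ?case by simp
next
  case (Suc m)
  let ?P = "measure_pmf.prob (Pi_pmf E False p)"
  define C where "C = {f. \<forall>j<m. f \<notin> up (S j)}"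
  define D2 where "D2 = {f. \<forall>j<m. S j \<inter> S m = {} \<longrightarrow> f \<notin> up (S j)}"
  define J where "J = {j. j < m \<and> S m \<inter> S j \<noteq> {}}"
  define a where "a = ?P (up (S m)) - (\<Sum>j\<in>J. ?P (up (S m) \<inter> up (S j)))"
  have finJ: "finite J" unfolding J_def by auto
  have CD2: "C \<subseteq> D2" unfolding C_def D2_def by auto
  have inv: "f \<in> D2 \<longleftrightarrow> g \<in> D2" if "\<And>x. x \<notin> S m \<Longrightarrow> f x = g x" for f g
  proof -
    have "f \<in> up (S j) \<longleftrightarrow> g \<in> up (S j)" if "S j \<inter> S m = {}" for j
      using that \<open>\<And>x. x \<notin> S m \<Longrightarrow> f x = g x\<close> unfolding up_def by blast
    thus ?thesis unfolding D2_def by blast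
  qed
  have dec: "g \<in> D2" if "f \<in> D2" "\<And>x. g x \<Longrightarrow> f x" for f g
    using that unfolding D2_def up_def by blast
  have cover: "up (S m) \<inter> D2 \<subseteq> (up (S m) \<inter> C) \<union> (\<Union>j\<in>J. up (S m \<union> S j) \<inter> D2)"
  proof
    fix f assume f: "f \<in> up (S m) \<inter> D2"
    show "f \<in> (up (S m) \<inter> C) \<union> (\<Union>j\<in>J. up (S m \<union> S j) \<inter> D2)"
    proof (cases "f \<in> C")
      case False
      then obtain j where j: "j < m" "f \<in> up (S j)" unfolding C_def by auto
      with f have "S j \<inter> S m \<noteq> {}" unfolding D2_def by auto
      with j f show ?thesis unfolding J_def up_def by auto
    qed (use f in auto)
  qed
  have "?P (up (S m) \<inter> D2) \<le> ?P ((up (S m) \<inter> C) \<union> (\<Union>j\<in>J. up (S m \<union> S j) \<inter> D2))"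
    by (rule measure_pmf.finite_measure_mono[OF cover]) auto
  also have "\<dots> \<le> ?P (up (S m) \<inter> C) + ?P (\<Union>j\<in>J. up (S m \<union> S j) \<inter> D2)"
    by (rule measure_Un_le) auto
  also have "?P (\<Union>j\<in>J. up (S m \<union> S j) \<inter> D2) \<le> (\<Sum>j\<in>J. ?P (up (S m \<union> S j) \<inter> D2))"
    by (rule measure_pmf.finite_measure_subadditive_finite) (use finJ in auto)
  also have "\<dots> \<le> (\<Sum>j\<in>J. ?P (up (S m) \<inter> up (S j)) * ?P D2)"
  proof (rule sum_mono)
    fix j assume "j \<in> J"
    have "up (S m \<union> S j) = up (S m) \<inter> up (S j)" unfolding up_def by auto
    moreover have "?P (up (S m \<union> S j) \<inter> D2) \<le> ?P (up (S m \<union> S j)) * ?P D2"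
      by (rule prob_up_harris[OF E]) (use SE dec in auto)
    ultimately show "?P (up (S m \<union> S j) \<inter> D2) \<le> ?P (up (S m) \<inter> up (S j)) * ?P D2" by simp
  qed
  finally have A: "?P (up (S m) \<inter> D2) \<le> ?P (up (S m) \<inter> C) + (\<Sum>j\<in>J. ?P (up (S m) \<inter> up (S j))) * ?P D2"
    by (simp add: sum_distrib_right)
  have B: "?P (up (S m) \<inter> D2) = ?P (up (S m)) * ?P D2"
    by (rule prob_up_indep[OF E SE]) (rule inv, blast)
  have key: "?P (up (S m) \<inter> C) \<ge> ?P D2 * a"
    using A B unfolding a_def by (simp add: algebra_simps)
  have Cs: "{f. \<forall>j<Suc m. f \<notin> up (S j)} = C - (up (S m) \<inter> C)"
    unfolding C_def by (auto simp: less_Suc_eq)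
  have step: "?P {f. \<forall>j<Suc m. f \<notin> up (S j)} = ?P C - ?P (up (S m) \<inter> C)"
    unfolding Cs by (rule measure_pmf.finite_measure_Diff) auto
  have PC: "0 \<le> ?P C" "?P C \<le> ?P D2"
    using CD2 by (auto intro: measure_pmf.finite_measure_mono)
  have st: "?P {f. \<forall>j<Suc m. f \<notin> up (S j)} \<le> ?P C * exp (- a)"
  proof (cases "a \<ge> 0")
    case True
    have "?P D2 * a \<ge> ?P C * a" using PC True by (intro mult_right_mono) auto
    hence "?P {f. \<forall>j<Suc m. f \<notin> up (S j)} \<le> ?P C * (1 - a)"
      using key step by (simp add: algebra_simps)
    also have "\<dots> \<le> ?P C * exp (- a)"
      using PC by (intro mult_left_mono) (auto simp: exp_ge_add_one_self[of "-a", simplified])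
    finally show ?thesis .
  next
    case False
    have "?P {f. \<forall>j<Suc m. f \<notin> up (S j)} \<le> ?P C"
      unfolding step by simp
    also have "\<dots> \<le> ?P C * exp (- a)"
    proof -
      have "1 \<le> exp (- a)" using False by simp
      thus ?thesis using PC mult_left_mono[of 1 "exp (-a)" "?P C"] by simp
    qed
    finally show ?thesis .
  qed
  have J': "{j. j < m \<and> S m \<inter> S j \<noteq> {}} = J" unfolding J_def ..
  have "?P C * exp (- a) \<le> exp (- (\<Sum>i<m. ?P (up (S i))) + (\<Sum>i<m. \<Sum>j\<in>{j. j < i \<and> S i \<inter> S j \<noteq> {}}. ?P (up (S i) \<inter> up (S j)))) * exp (- a)"
    using Suc.IH unfolding C_def by (intro mult_right_mono) auto
  also have "\<dots> = exp (- (\<Sum>i<Suc m. ?P (up (S i))) + (\<Sum>i<Suc m. \<Sum>j\<in>{j. j < i \<and> S i \<inter> S j \<noteq> {}}. ?P (up (S i) \<inter> up (S j))))"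
    unfolding a_def by (simp add: exp_add[symmetric] J')
  finally show ?case using st by linarith
qed


lemma janson_set:
  fixes S :: "'i \<Rightarrow> 'e set"
  assumes E: "finite E" and I: "finite I" and SE: "\<And>i. i \<in> I \<Longrightarrow> S i \<subseteq> E"
  shows "measure_pmf.prob (Pi_pmf E False p) {f. \<forall>i\<in>I. f \<notin> up (S i)}
    \<le> exp (- (\<Sum>i\<in>I. measure_pmf.prob (Pi_pmf E False p) (up (S i)))
          + (\<Sum>i\<in>I. \<Sum>j\<in>{j\<in>I. j \<noteq> i \<and> S i \<inter> S j \<noteq> {}}.
               measure_pmf.prob (Pi_pmf E False p) (up (S i) \<inter> up (S j))))"
proof -
  let ?P = "measure_pmf.prob (Pi_pmf E False p)"
  define m where "m = card I"
  obtain h where h: "bij_betw h {0..<m} I"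
    using ex_bij_betw_nat_finite[OF I] unfolding m_def by blast
  define S' where "S' = (\<lambda>i. if i < m then S (h i) else {})"
  have hm: "h ` {..<m} = I" using h by (simp add: bij_betw_def lessThan_atLeast0)
  have S'E: "S' i \<subseteq> E" for i
  proof (cases "i < m")
    case True
    hence "h i \<in> I" using hm by blast
    thus ?thesis using SE True unfolding S'_def by simp
  qed (simp add: S'_def)
  have hinj: "inj_on h {..<m}" using h by (simp add: bij_betw_def lessThan_atLeast0)
  have ev: "{f. \<forall>j<m. f \<notin> up (S' j)} = {f. \<forall>i\<in>I. f \<notin> up (S i)}"
    unfolding S'_def using hm by auto
  have s1: "(\<Sum>i<m. ?P (up (S' i))) = (\<Sum>i\<in>I. ?P (up (S i)))"
  proof -
    have "(\<Sum>i<m. ?P (up (S' i))) = (\<Sum>i<m. ?P (up (S (h i))))"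
      by (intro sum.cong) (auto simp: S'_def)
    also have "\<dots> = (\<Sum>i\<in>I. ?P (up (S i)))"
      using sum.reindex[OF hinj, of "\<lambda>i. ?P (up (S i))"] hm by simp
    finally show ?thesis .
  qed
  define G where "G = (\<lambda>i. \<Sum>j\<in>{j\<in>I. j \<noteq> i \<and> S i \<inter> S j \<noteq> {}}. ?P (up (S i) \<inter> up (S j)))"
  have s2: "(\<Sum>i<m. \<Sum>j\<in>{j. j < i \<and> S' i \<inter> S' j \<noteq> {}}. ?P (up (S' i) \<inter> up (S' j)))
       \<le> (\<Sum>i\<in>I. G i)"
  proof -
    have "(\<Sum>i<m. \<Sum>j\<in>{j. j < i \<and> S' i \<inter> S' j \<noteq> {}}. ?P (up (S' i) \<inter> up (S' j)))
        \<le> (\<Sum>i<m. \<Sum>j\<in>{j. j < m \<and> j \<noteq> i \<and> S' i \<inter> S' j \<noteq> {}}. ?P (up (S' i) \<inter> up (S' j)))"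
    proof (rule sum_mono)
      fix i assume i: "i \<in> {..<m}"
      show "(\<Sum>j\<in>{j. j < i \<and> S' i \<inter> S' j \<noteq> {}}. ?P (up (S' i) \<inter> up (S' j)))
        \<le> (\<Sum>j\<in>{j. j < m \<and> j \<noteq> i \<and> S' i \<inter> S' j \<noteq> {}}. ?P (up (S' i) \<inter> up (S' j)))"
        by (rule sum_mono2) (use i in auto)
    qed
    also have "\<dots> = (\<Sum>i<m. G (h i))"
    proof (rule sum.cong[OF refl])
      fix i assume i: "i \<in> {..<m}"
      have sub: "{j. j < m \<and> j \<noteq> i \<and> S' i \<inter> S' j \<noteq> {}} \<subseteq> {..<m}" by auto
      have img: "h ` {j. j < m \<and> j \<noteq> i \<and> S' i \<inter> S' j \<noteq> {}} = {j\<in>I. j \<noteq> h i \<and> S (h i) \<inter> S j \<noteq> {}}"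
      proof (intro equalityI subsetI)
        fix y assume "y \<in> h ` {j. j < m \<and> j \<noteq> i \<and> S' i \<inter> S' j \<noteq> {}}"
        then obtain j where j: "j < m" "j \<noteq> i" "S' i \<inter> S' j \<noteq> {}" "y = h j" by auto
        have "h j \<noteq> h i" using hinj j i by (auto simp: inj_on_def)
        thus "y \<in> {j\<in>I. j \<noteq> h i \<and> S (h i) \<inter> S j \<noteq> {}}"
          using j i hm by (auto simp: S'_def)
      next
        fix y assume y: "y \<in> {j\<in>I. j \<noteq> h i \<and> S (h i) \<inter> S j \<noteq> {}}"
        hence "y \<in> h ` {..<m}" using hm by simp
        then obtain j where j: "j < m" "y = h j" by auto
        have "j \<noteq> i" using j y by auto
        moreover have "S' i \<inter> S' j \<noteq> {}" using y i j by (simp add: S'_def)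
        ultimately show "y \<in> h ` {j. j < m \<and> j \<noteq> i \<and> S' i \<inter> S' j \<noteq> {}}"
          using j by blast
      qed
      have "(\<Sum>j\<in>{j. j < m \<and> j \<noteq> i \<and> S' i \<inter> S' j \<noteq> {}}. ?P (up (S' i) \<inter> up (S' j)))
          = (\<Sum>j\<in>{j. j < m \<and> j \<noteq> i \<and> S' i \<inter> S' j \<noteq> {}}. ?P (up (S (h i)) \<inter> up (S (h j))))"
        by (intro sum.cong) (use i in \<open>auto simp: S'_def\<close>)
      also have "\<dots> = G (h i)"
        unfolding G_def img[symmetric]
        by (rule sum.reindex[symmetric, unfolded comp_def]) (rule inj_on_subset[OF hinj sub])
      finally show "(\<Sum>j\<in>{j. j < m \<and> j \<noteq> i \<and> S' i \<inter> S' j \<noteq> {}}. ?P (up (S' i) \<inter> up (S' j))) = G (h i)" .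
    qed
    also have "\<dots> = (\<Sum>i\<in>I. G i)"
      using sum.reindex[OF hinj, of G] hm by simp
    finally show ?thesis .
  qed
  have "?P {f. \<forall>i\<in>I. f \<notin> up (S i)} = ?P {f. \<forall>j<m. f \<notin> up (S' j)}" by (simp add: ev)
  also have "\<dots> \<le> exp (- (\<Sum>i<m. ?P (up (S' i)))
          + (\<Sum>i<m. \<Sum>j\<in>{j. j < i \<and> S' i \<inter> S' j \<noteq> {}}. ?P (up (S' i) \<inter> up (S' j))))"
    by (rule janson_nat[OF E S'E])
  also have "\<dots> \<le> exp (- (\<Sum>i\<in>I. ?P (up (S i))) + (\<Sum>i\<in>I. G i))"
    using s1 s2 by simp
  finally show ?thesis unfolding G_def .
qed


lemma pow_lt_2: "(s::nat) < 2 ^ s" by (rule less_exp)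

lemma sq_le_4pow: "(s::nat) ^ 2 \<le> 2 ^ (2 * s)"
proof -
  have "s ^ 2 \<le> (2 ^ s) ^ 2" using pow_lt_2[of s] by (intro power_mono) auto
  thus ?thesis by (simp add: power_mult[symmetric] mult.commute)
qed

lemma N1:
  fixes s t :: nat and a x r :: real
  assumes s3: "s \<ge> 3" and t1: "1 \<le> t" and ts: "t + 2 \<le> s"
    and a0: "0 \<le> a" and a4: "a \<le> 4" and as: "a ^ s = 8 * real s"
    and x40: "x \<ge> 2 ^ 40" and r: "r = a / x"
  shows "real (s choose t) * (x ^ s / real t) ^ t * r ^ (t * (2 * s - t - 1)) \<le> (1/4) ^ t"
proof -
  define k where "k = s - t - 1"
  have k1: "k \<ge> 1" using ts unfolding k_def by simp
  have ex: "2 * s - t - 1 = s + k" unfolding k_def using ts by simp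
  have xpos: "x > 0" using x40 by (smt (verit) zero_less_power)
  have r0: "0 \<le> r" using a0 xpos r by simp
  have rb: "r \<le> 1 / 2 ^ 38"
  proof -
    have "r = a / x" by (rule r)
    also have "\<dots> \<le> 4 / x" using a4 xpos by (intro divide_right_mono) auto
    also have "\<dots> \<le> 4 / 2 ^ 40" using x40 by (intro divide_left_mono) auto
    finally show ?thesis by simp
  qed
  have r1: "r \<le> 1" using rb by simp
  have xr: "x ^ s * r ^ s = 8 * real s"
    using as xpos r by (simp add: power_divide)
  have base: "x ^ s / real t * r ^ (s + k) = 8 * real s * r ^ k / real t"
    using xr by (simp add: power_add field_simps)
  have "real (s choose t) * (x ^ s / real t) ^ t * r ^ (t * (2 * s - t - 1))
      = real (s choose t) * (8 * real s * r ^ k / real t) ^ t"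
  proof -
    have "r ^ (t * (s + k)) = (r ^ (s + k)) ^ t" by (simp add: power_mult[symmetric] mult.commute)
    hence "(x ^ s / real t) ^ t * r ^ (t * (s + k)) = (x ^ s / real t * r ^ (s + k)) ^ t"
      by (simp only: power_mult_distrib)
    thus ?thesis unfolding ex base by (simp add: mult.assoc)
  qed
  also have "\<dots> \<le> (1/4) ^ t"
  proof (cases "s \<le> 2 * t")
    case True
    have C: "real (s choose t) \<le> 4 ^ t"
    proof -
      have "s choose t \<le> 2 ^ s" by (rule binomial_le_pow2)
      also have "(2::nat) ^ s \<le> 2 ^ (2 * t)" using True by (intro power_increasing) auto
      also have "(2::nat) ^ (2 * t) = 4 ^ t" by (simp add: power_mult)
      finally have "real (s choose t) \<le> real ((4::nat) ^ t)" by (rule of_nat_mono)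
      thus ?thesis by simp
    qed
    have b: "8 * real s * r ^ k / real t \<le> 1 / 2 ^ 34"
    proof -
      have "r ^ k \<le> r" using r0 r1 k1 by (metis power_one_right power_decreasing)
      have "8 * real s * r ^ k / real t \<le> 8 * real s * r / real t"
        using \<open>r ^ k \<le> r\<close> t1 by (intro divide_right_mono mult_left_mono) auto
      also have "\<dots> = (8 * real s / real t) * r" by simp
      also have "\<dots> \<le> 16 * (1 / 2 ^ 38)"
        using True t1 r0 rb by (intro mult_mono) (auto simp: field_simps)
      finally show ?thesis by simp
    qed
    have b0: "0 \<le> 8 * real s * r ^ k / real t" using r0 by simp
    have "real (s choose t) * (8 * real s * r ^ k / real t) ^ t \<le> 4 ^ t * (1 / 2 ^ 34) ^ t"
      using C b b0 by (intro mult_mono power_mono) auto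
    also have "\<dots> = (4 * (1 / 2 ^ 34)) ^ t" by (simp only: power_mult_distrib)
    also have "\<dots> \<le> (1/4) ^ t" by (intro power_mono) auto
    finally show ?thesis .
  next
    case False
    have C: "real (s choose t) \<le> real s ^ t"
    proof -
      have "s choose t \<le> s ^ t" using binomial_le_pow[of t s] ts by simp
      hence "real (s choose t) \<le> real (s ^ t)" by (rule of_nat_mono)
      thus ?thesis by simp
    qed
    have kk: "2 * s + 5 \<le> 38 * k" using False s3 unfolding k_def by linarith
    have nat1: "32 * s ^ 2 \<le> (2::nat) ^ (38 * k)"
    proof -
      have "32 * s ^ 2 \<le> 32 * 2 ^ (2 * s)" using sq_le_4pow[of s] by simp
      also have "\<dots> = 2 ^ (2 * s + 5)" by (simp add: power_add)
      also have "\<dots> \<le> (2::nat) ^ (38 * k)" using kk by (intro power_increasing) auto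
      finally show ?thesis .
    qed
    hence "real (32 * s ^ 2) \<le> real ((2::nat) ^ (38 * k))" by (rule of_nat_mono)
    hence real1: "32 * real s ^ 2 \<le> 2 ^ (38 * k)" by simp
    have b: "real s * (8 * real s * r ^ k / real t) \<le> 1 / 4"
    proof -
      have rk: "r ^ k \<le> (1 / 2 ^ 38) ^ k" using r0 rb by (intro power_mono) auto
      have y0: "0 \<le> 8 * real s * r ^ k" using r0 by simp
      have "8 * real s * r ^ k \<le> 8 * real s * r ^ k * real t"
        using mult_left_mono[of 1 "real t" "8 * real s * r ^ k"] t1 y0 by simp
      hence "8 * real s * r ^ k / real t \<le> 8 * real s * r ^ k"
        using t1 by (simp add: divide_le_eq)
      hence "real s * (8 * real s * r ^ k / real t) \<le> real s * (8 * real s * r ^ k)"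
        by (intro mult_left_mono) auto
      also have "\<dots> = 8 * real s ^ 2 * r ^ k" by (simp add: power2_eq_square)
      also have "\<dots> \<le> 8 * real s ^ 2 * (1 / 2 ^ 38) ^ k" using rk by (intro mult_left_mono) auto
      also have "\<dots> = 8 * real s ^ 2 / 2 ^ (38 * k)" by (simp add: power_mult power_divide)
      also have "\<dots> \<le> 1 / 4" using real1 by (simp add: divide_le_eq)
      finally show ?thesis .
    qed
    have b0: "0 \<le> 8 * real s * r ^ k / real t" using r0 by simp
    have "real (s choose t) * (8 * real s * r ^ k / real t) ^ t \<le> real s ^ t * (8 * real s * r ^ k / real t) ^ t"
      using C b0 by (intro mult_right_mono) auto
    also have "\<dots> = (real s * (8 * real s * r ^ k / real t)) ^ t" by (simp only: power_mult_distrib)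
    also have "\<dots> \<le> (1/4) ^ t" using b b0 r0 by (intro power_mono) auto
    finally show ?thesis .
  qed
  finally show ?thesis .
qed

lemma geo4: "(\<Sum>k\<in>{2..<s}. (1/4::real) ^ (s - k)) \<le> 1/3"
proof (induction s)
  case 0 thus ?case by simp
next
  case (Suc s)
  show ?case
  proof (cases "s < 2")
    case True
    hence "{2..<Suc s} = {}" by auto
    thus ?thesis by simp
  next
    case False
    have "{2..<Suc s} = insert s {2..<s}" using False by auto
    hence "(\<Sum>k\<in>{2..<Suc s}. (1/4::real) ^ (Suc s - k)) = (1/4) + (\<Sum>k\<in>{2..<s}. (1/4::real) ^ (Suc s - k))"
      by simp
    also have "(\<Sum>k\<in>{2..<s}. (1/4::real) ^ (Suc s - k)) = (1/4) * (\<Sum>k\<in>{2..<s}. (1/4::real) ^ (s - k))"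
      by (simp add: sum_distrib_left Suc_diff_le power_Suc[symmetric] del: power_Suc)
    finally show ?thesis using Suc.IH by simp
  qed
qed


definition prs :: "(nat \<Rightarrow> 'a) \<Rightarrow> nat set \<Rightarrow> 'a set set" where
  "prs \<phi> A = {{\<phi> i, \<phi> j} | i j. i \<in> A \<and> j \<in> A \<and> i \<noteq> j}"

lemma card_prs:
  assumes "finite A" "inj_on \<phi> A"
  shows "card (prs \<phi> A) = card A choose 2"
proof -
  have eq: "prs \<phi> A = image \<phi> ` {B. B \<subseteq> A \<and> card B = 2}"
  proof (intro equalityI subsetI)
    fix e assume "e \<in> prs \<phi> A"
    then obtain i j where ij: "i \<in> A" "j \<in> A" "i \<noteq> j" "e = {\<phi> i, \<phi> j}"
      unfolding prs_def by blast
    hence "e = \<phi> ` {i, j}" "{i, j} \<in> {B. B \<subseteq> A \<and> card B = 2}" by auto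
    thus "e \<in> image \<phi> ` {B. B \<subseteq> A \<and> card B = 2}" by blast
  next
    fix e assume "e \<in> image \<phi> ` {B. B \<subseteq> A \<and> card B = 2}"
    then obtain B where B: "B \<subseteq> A" "card B = 2" "e = \<phi> ` B" by blast
    then obtain i j where "B = {i, j}" "i \<noteq> j" by (auto simp: card_2_iff)
    thus "e \<in> prs \<phi> A" using B unfolding prs_def by auto
  qed
  have inj: "inj_on (image \<phi>) {B. B \<subseteq> A \<and> card B = 2}"
    by (rule inj_on_subset[OF inj_on_image_Pow[OF assms(2)]]) auto
  show ?thesis unfolding eq card_image[OF inj] using n_subsets[OF assms(1)] by simp
qed

lemma prs_ne:
  assumes "prs \<phi> A \<noteq> {}" "finite A"
  shows "2 \<le> card A"
proof -
  obtain i j where "i \<in> A" "j \<in> A" "i \<noteq> j" using assms(1) unfolding prs_def by blast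
  hence "card {i, j} \<le> card A" using assms(2) by (intro card_mono) auto
  moreover have "card {i, j} = 2" using \<open>i \<noteq> j\<close> by simp
  ultimately show ?thesis by simp
qed

definition Yc :: "'a set \<Rightarrow> ('a \<Rightarrow> nat) \<Rightarrow> nat \<Rightarrow> 'a set" where
  "Yc Y col i = {y\<in>Y. col y = i}"

lemma I_col:
  assumes "\<phi> \<in> PiE {..<s} (Yc Y col)" "i < s"
  shows "col (\<phi> i) = i" "\<phi> i \<in> Y"
  using assms by (auto simp: Yc_def PiE_def Pi_def)

lemma I_inj:
  assumes "\<phi> \<in> PiE {..<s} (Yc Y col)"
  shows "inj_on \<phi> {..<s}"
  using I_col[OF assms] by (metis inj_onI lessThan_iff)

lemma agree_int:
  assumes \<phi>: "\<phi> \<in> PiE {..<s} (Yc Y col)" and \<psi>: "\<psi> \<in> PiE {..<s} (Yc Y col)"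
  shows "prs \<phi> {..<s} \<inter> prs \<psi> {..<s} = prs \<phi> {i. i < s \<and> \<phi> i = \<psi> i}"
proof (intro equalityI subsetI)
  fix e assume e: "e \<in> prs \<phi> {..<s} \<inter> prs \<psi> {..<s}"
  then obtain i j where ij: "i < s" "j < s" "i \<noteq> j" "e = {\<phi> i, \<phi> j}"
    unfolding prs_def by blast
  from e obtain i' j' where ij': "i' < s" "j' < s" "i' \<noteq> j'" "e = {\<psi> i', \<psi> j'}"
    unfolding prs_def by blast
  have c: "col (\<phi> i) = i" "col (\<phi> j) = j" "col (\<psi> i') = i'" "col (\<psi> j') = j'"
    using I_col[OF \<phi>] I_col[OF \<psi>] ij ij' by auto
  have "(\<phi> i = \<psi> i' \<and> \<phi> j = \<psi> j') \<or> (\<phi> i = \<psi> j' \<and> \<phi> j = \<psi> i')"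
    using ij(4) ij'(4) by (metis doubleton_eq_iff)
  hence "\<phi> i = \<psi> i \<and> \<phi> j = \<psi> j"
    using c by auto
  thus "e \<in> prs \<phi> {i. i < s \<and> \<phi> i = \<psi> i}" using ij unfolding prs_def by blast
next
  fix e assume "e \<in> prs \<phi> {i. i < s \<and> \<phi> i = \<psi> i}"
  then obtain i j where ij: "i < s" "j < s" "i \<noteq> j" "e = {\<phi> i, \<phi> j}" "\<phi> i = \<psi> i" "\<phi> j = \<psi> j"
    unfolding prs_def by blast
  have "e \<in> prs \<phi> {..<s}" using ij unfolding prs_def by blast
  moreover have "e = {\<psi> i, \<psi> j}" using ij by simp
  hence "e \<in> prs \<psi> {..<s}" using ij unfolding prs_def by blast
  ultimately show "e \<in> prs \<phi> {..<s} \<inter> prs \<psi> {..<s}" by blast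
qed

lemma card_fix:
  assumes "\<phi> \<in> PiE {..<s} (Yc Y col)" "A \<subseteq> {..<s}"
  shows "card {\<psi> \<in> PiE {..<s} (Yc Y col). \<forall>i\<in>A. \<psi> i = \<phi> i} = (\<Prod>i\<in>{..<s} - A. card (Yc Y col i))"
proof -
  have "{\<psi> \<in> PiE {..<s} (Yc Y col). \<forall>i\<in>A. \<psi> i = \<phi> i} = PiE {..<s} (\<lambda>i. if i \<in> A then {\<phi> i} else Yc Y col i)"
    using assms by (auto simp: PiE_def Pi_def split: if_splits)
  hence "card {\<psi> \<in> PiE {..<s} (Yc Y col). \<forall>i\<in>A. \<psi> i = \<phi> i} = (\<Prod>i<s. card (if i \<in> A then {\<phi> i} else Yc Y col i))"
    by (simp add: card_PiE)
  also have "\<dots> = (\<Prod>i<s. if i \<notin> A then card (Yc Y col i) else 1)"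
    by (intro prod.cong) auto
  also have "\<dots> = (\<Prod>i\<in>{i\<in>{..<s}. i \<notin> A}. card (Yc Y col i))"
    by (rule prod.inter_filter[symmetric]) simp
  also have "{i\<in>{..<s}. i \<notin> A} = {..<s} - A" by auto
  finally show ?thesis .
qed

lemma sum_card_Yc:
  assumes "finite Y" "B \<subseteq> {..<s}"
  shows "(\<Sum>i\<in>B. card (Yc Y col i)) \<le> card Y"
proof -
  have fB: "finite B" using assms(2) finite_subset by blast
  have "(\<Sum>i\<in>B. card (Yc Y col i)) = card (\<Union>i\<in>B. Yc Y col i)"
    by (rule card_UN_disjoint[symmetric]) (use fB assms(1) in \<open>auto simp: Yc_def\<close>)
  also have "\<dots> \<le> card Y" by (rule card_mono[OF assms(1)]) (auto simp: Yc_def)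
  finally show ?thesis .
qed

lemma sum_card_Yc_all:
  assumes "finite Y" "\<forall>y\<in>Y. col y < s"
  shows "(\<Sum>i<s. card (Yc Y col i)) = card Y"
proof -
  have "(\<Sum>i<s. card (Yc Y col i)) = card (\<Union>i<s. Yc Y col i)"
    by (rule card_UN_disjoint[symmetric]) (use assms(1) in \<open>auto simp: Yc_def\<close>)
  also have "(\<Union>i<s. Yc Y col i) = Y" using assms(2) by (auto simp: Yc_def)
  finally show ?thesis .
qed

lemma amgm:
  fixes y :: "nat \<Rightarrow> real"
  assumes "finite B" "card B = t" "t \<ge> 1" "\<And>i. i \<in> B \<Longrightarrow> y i \<ge> 0" "(\<Sum>i\<in>B. y i) \<le> m"
  shows "(\<Prod>i\<in>B. y i) \<le> (m / t) ^ t"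
proof -
  have Bne: "B \<noteq> {}" using assms(2,3) by auto
  have P0: "(\<Prod>i\<in>B. y i) \<ge> 0" using assms(4) by (simp add: prod_nonneg)
  have g: "(\<Prod>i\<in>B. y i) powr (1 / t) \<le> (\<Sum>i\<in>B. y i / t)"
    using arith_geom_mean[OF assms(1) Bne, of y] assms(2,4) by simp
  also have "\<dots> = (\<Sum>i\<in>B. y i) / t" by (simp add: sum_divide_distrib)
  also have "\<dots> \<le> m / t" using assms(3,5) by (intro divide_right_mono) auto
  finally have g2: "(\<Prod>i\<in>B. y i) powr (1 / t) \<le> m / t" .
  show ?thesis
  proof (cases "(\<Prod>i\<in>B. y i) = 0")
    case True
    have "0 \<le> m / t" using g2 True by simp
    thus ?thesis using True by simp
  next
    case False
    hence pos: "(\<Prod>i\<in>B. y i) > 0" using P0 by simp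
    have "(\<Prod>i\<in>B. y i) = ((\<Prod>i\<in>B. y i) powr (1 / t)) ^ t"
      using pos assms(3) by (simp add: powr_realpow[symmetric] powr_powr)
    also have "\<dots> \<le> (m / t) ^ t" using g2 by (intro power_mono) auto
    finally show ?thesis .
  qed
qed

lemma prod_lower:
  fixes d :: "nat \<Rightarrow> real"
  assumes "finite J" "a \<ge> 0" "\<And>i. i \<in> J \<Longrightarrow> d i \<ge> 0"
  shows "a * (\<Prod>i\<in>J. a + d i) \<ge> a ^ (card J + 1) + a ^ card J * (\<Sum>i\<in>J. d i)"
  using assms
proof (induction J rule: finite_induct)
  case empty thus ?case by simp
next
  case (insert x J)
  have IH: "a * (\<Prod>i\<in>J. a + d i) \<ge> a ^ (card J + 1) + a ^ card J * (\<Sum>i\<in>J. d i)"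
    using insert by auto
  have dx: "d x \<ge> 0" using insert by auto
  have S0: "(\<Sum>i\<in>J. d i) \<ge> 0" using insert by (auto intro: sum_nonneg)
  have "a * (\<Prod>i\<in>insert x J. a + d i) = (a + d x) * (a * (\<Prod>i\<in>J. a + d i))"
    using insert by (simp add: algebra_simps)
  also have "\<dots> \<ge> (a + d x) * (a ^ (card J + 1) + a ^ card J * (\<Sum>i\<in>J. d i))"
    using IH dx insert by (intro mult_left_mono) auto
  finally have 1: "a * (\<Prod>i\<in>insert x J. a + d i) \<ge> (a + d x) * (a ^ (card J + 1) + a ^ card J * (\<Sum>i\<in>J. d i))" .
  have "(a + d x) * (a ^ (card J + 1) + a ^ card J * (\<Sum>i\<in>J. d i))
      = a ^ (card J + 2) + a ^ (card J + 1) * (\<Sum>i\<in>J. d i) + d x * a ^ (card J + 1) + d x * a ^ card J * (\<Sum>i\<in>J. d i)"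
    by (simp add: algebra_simps)
  also have "\<dots> \<ge> a ^ (card J + 2) + a ^ (card J + 1) * (d x + (\<Sum>i\<in>J. d i))"
    using dx S0 insert by (simp add: algebra_simps)
  finally show ?case using 1 insert by (simp add: add.commute)
qed

lemma two_choose: "2 * (n choose 2) = n * (n - 1)"
proof -
  have "even (n * (n - 1))" by (cases "even n") auto
  thus ?thesis by (simp add: choose_two)
qed

lemma choose_diff:
  assumes "k \<le> s"
  shows "2 * ((s choose 2) - (k choose 2)) = (s - k) * (2 * s - (s - k) - 1)"
proof -
  obtain t where s: "s = k + t" using assms le_Suc_ex by blast
  have km: "k choose 2 \<le> s choose 2" using assms by (rule binomial_right_mono)
  have "2 * ((s choose 2) - (k choose 2)) = s * (s - 1) - k * (k - 1)"
    using km by (simp add: diff_mult_distrib2 two_choose)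
  also have "\<dots> = t * (2 * k + t - 1)"
    unfolding s by (cases k; cases t) (simp_all add: algebra_simps)
  also have "2 * k + t - 1 = 2 * s - (s - k) - 1" using s by simp
  finally show ?thesis using s by simp
qed


lemma real_facts:
  fixes s n :: nat and \<rho> :: real
  assumes s3: "s \<ge> 3" and n: "real n \<ge> 2 powr (40 * real s)"
    and rho: "\<rho> = (8 * real s / real n) powr (2 / real s)"
  defines "x \<equiv> real n powr (1 / real s)" and "a \<equiv> (8 * real s) powr (1 / real s)"
  shows "x ^ s = real n" "a ^ s = 8 * real s" "0 \<le> a" "a \<le> 4" "x \<ge> 2 ^ 40" "\<rho> = (a / x) ^ 2"
proof -
  have s0: "real s > 0" using s3 by simp
  have n2: "real n \<ge> 2 ^ (40 * s)"
    using n by (simp add: powr_realpow[symmetric])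
  have npos: "real n > 0" using n2 by (smt (verit) zero_less_power)
  have xpos: "x > 0" unfolding x_def using npos by simp
  have apos: "a > 0" unfolding a_def using s0 by simp
  show xs: "x ^ s = real n"
  proof -
    have "x ^ s = x powr real s" using xpos by (simp add: powr_realpow)
    also have "\<dots> = real n" unfolding x_def using s0 npos by (simp add: powr_powr)
    finally show ?thesis .
  qed
  show as: "a ^ s = 8 * real s"
  proof -
    have "a ^ s = a powr real s" using apos by (simp add: powr_realpow)
    also have "\<dots> = 8 * real s" unfolding a_def using s0 by (simp add: powr_powr)
    finally show ?thesis .
  qed
  show "0 \<le> a" using apos by simp
  have "8 * s \<le> (4::nat) ^ s"
  proof -
    have "(8::nat) \<le> 2 ^ s" using power_increasing[of 3 s "2::nat"] s3 by simp
    moreover have "s \<le> 2 ^ s" using less_exp[of s] by simp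
    ultimately have "8 * s \<le> 2 ^ s * 2 ^ s" by (intro mult_mono) auto
    also have "\<dots> = (4::nat) ^ s" by (simp add: power_mult_distrib[symmetric])
    finally show ?thesis .
  qed
  hence "real (8 * s) \<le> real ((4::nat) ^ s)" by (rule of_nat_mono)
  hence "a ^ s \<le> 4 ^ s" using as by simp
  moreover have "s = Suc (s - 1)" using s3 by simp
  ultimately show "a \<le> 4" using power_le_imp_le_base[of a "s - 1" 4] by simp
  have "(2 ^ 40) ^ s \<le> x ^ s" using xs n2 by (simp add: power_mult)
  moreover have "s = Suc (s - 1)" using s3 by simp
  ultimately show "x \<ge> 2 ^ 40" using power_le_imp_le_base[of "2 ^ 40" "s - 1" x] xpos by simp
  show "\<rho> = (a / x) ^ 2"
  proof -
    have "\<rho> = (8 * real s) powr (2 / real s) / real n powr (2 / real s)"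
      unfolding rho by (rule powr_divide)
    also have "(8 * real s) powr (2 / real s) = a ^ 2"
    proof -
      have "a ^ 2 = a powr 2" using apos by (simp only: powr_numeral less_imp_le)
      also have "\<dots> = (8 * real s) powr (1 / real s * 2)" unfolding a_def by (rule powr_powr)
      also have "1 / real s * 2 = 2 / real s" by simp
      finally show ?thesis by simp
    qed
    also have "real n powr (2 / real s) = x ^ 2"
    proof -
      have "x ^ 2 = x powr 2" using xpos by (simp only: powr_numeral less_imp_le)
      also have "\<dots> = real n powr (1 / real s * 2)" unfolding x_def by (rule powr_powr)
      also have "1 / real s * 2 = 2 / real s" by simp
      finally show ?thesis by simp
    qed
    finally show ?thesis by (simp only: power_divide)
  qed
qed


theorem proposition2p2:
  fixes Y :: "'a set" and col :: "'a \<Rightarrow> nat" and s n :: nat and \<rho> :: real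
  assumes "s \<ge> 3"
    and "real n \<ge> 2 powr (40 * real s)"
    and "\<rho> = (8 * real s / real n) powr (2 / real s)"
    and "finite Y" and "card Y = n"
    and "\<forall>y\<in>Y. col y < s"
    and "\<forall>i<s. real (card {y\<in>Y. col y = i}) \<ge> real n / (2 * real s)"
  shows "measure_pmf.prob (random_partite_graph Y col \<rho>)
           {f. \<not> contains_clique {e. f e} s}
         \<le> exp (- (2 powr (2 * real s - 4)) * real n)"
proof -
  note s3 = assms(1) and fY = assms(4) and cY = assms(5) and colY = assms(6) and big = assms(7)
  define x where "x = real n powr (1 / real s)"
  define a where "a = (8 * real s) powr (1 / real s)"
  define r where "r = a / x"
  have xs: "x ^ s = real n" and as: "a ^ s = 8 * real s" and a0: "0 \<le> a" and a4: "a \<le> 4"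
    and x40: "x \<ge> 2 ^ 40" and rho: "\<rho> = r ^ 2"
    using real_facts[OF assms(1,2,3)] unfolding x_def a_def r_def by auto
  have xpos: "x > 0" using x40 by (smt (verit) zero_less_power)
  have npos: "real n > 0" using xs xpos by (metis zero_less_power)
  have r0: "0 \<le> r" unfolding r_def using a0 xpos by simp
  have r1: "r \<le> 1"
  proof -
    have "r \<le> 4 / x" unfolding r_def using a4 xpos by (intro divide_right_mono) auto
    also have "\<dots> \<le> 4 / 2 ^ 40" using x40 by (intro divide_left_mono) auto
    finally show ?thesis by simp
  qed
  have rho0: "0 \<le> \<rho>" "\<rho> \<le> 1" using r0 r1 rho by (auto simp: power_le_one)
  define E where "E = partite_edges Y col"
  define \<Omega> where "\<Omega> = Pi_pmf E False (\<lambda>_. bernoulli_pmf \<rho>)"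
  define I :: "(nat \<Rightarrow> 'a) set" where "I = PiE {..<s} (Yc Y col)"
  define S :: "(nat \<Rightarrow> 'a) \<Rightarrow> 'a set set" where "S = (\<lambda>\<phi>. prs \<phi> {..<s})"
  define c2 where "c2 = s choose 2"
  define y where "y = (\<lambda>i. card (Yc Y col i))"
  have finE: "finite E"
  proof -
    have "E \<subseteq> (\<lambda>(u, v). {u, v}) ` (Y \<times> Y)" unfolding E_def partite_edges_def by auto
    thus ?thesis using fY by (meson finite_SigmaI finite_imageI finite_subset)
  qed
  have finYc: "finite (Yc Y col i)" for i using fY unfolding Yc_def by simp
  have finI: "finite I" unfolding I_def using finYc by (intro finite_PiE) auto
  have SE: "S \<phi> \<subseteq> E" if "\<phi> \<in> I" for \<phi>
  proof
    fix e assume "e \<in> S \<phi>"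
    then obtain i j where ij: "i < s" "j < s" "i \<noteq> j" "e = {\<phi> i, \<phi> j}"
      unfolding S_def prs_def by blast
    have "col (\<phi> i) = i" "col (\<phi> j) = j" "\<phi> i \<in> Y" "\<phi> j \<in> Y"
      using I_col[of \<phi> s Y col] that ij unfolding I_def by auto
    hence "\<phi> i \<in> Y \<and> \<phi> j \<in> Y \<and> col (\<phi> i) \<noteq> col (\<phi> j)" using ij by auto
    thus "e \<in> E" unfolding E_def partite_edges_def using ij(4) by blast
  qed
  have cardS: "card (S \<phi>) = c2" if "\<phi> \<in> I" for \<phi>
    unfolding S_def c2_def using card_prs[of "{..<s}" \<phi>] I_inj[of \<phi> s Y col] that unfolding I_def by simp
  have finS: "finite (S \<phi>)" if "\<phi> \<in> I" for \<phi>
    using SE[OF that] finE finite_subset by blast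
  have sub1: "{f. \<not> contains_clique {e. f e} s} \<subseteq> {f. \<forall>\<phi>\<in>I. f \<notin> up (S \<phi>)}"
  proof safe
    fix f \<phi> assume nc: "\<not> contains_clique {e. f e} s" and \<phi>: "\<phi> \<in> I" and f: "f \<in> up (S \<phi>)"
    have inj: "inj_on \<phi> {..<s}" using I_inj[of \<phi> s Y col] \<phi> unfolding I_def by simp
    have "contains_clique {e. f e} s"
      unfolding contains_clique_def
    proof (intro exI[of _ "\<phi> ` {..<s}"] conjI ballI impI)
      show "finite (\<phi> ` {..<s})" by simp
      show "card (\<phi> ` {..<s}) = s" using card_image[OF inj] by simp
      fix u v assume u: "u \<in> \<phi> ` {..<s}" and v: "v \<in> \<phi> ` {..<s}" and uv: "u \<noteq> v"
      then obtain i j where "i < s" "j < s" "u = \<phi> i" "v = \<phi> j" by auto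
      with uv have "{u, v} \<in> S \<phi>" unfolding S_def prs_def by auto
      thus "{u, v} \<in> {e. f e}" using f unfolding up_def by auto
    qed
    with nc show False by simp
  qed
  define \<mu> where "\<mu> = (\<Sum>\<phi>\<in>I. measure_pmf.prob \<Omega> (up (S \<phi>)))"
  define \<Delta> where "\<Delta> = (\<Sum>\<phi>\<in>I. \<Sum>\<psi>\<in>{\<psi>\<in>I. \<psi> \<noteq> \<phi> \<and> S \<phi> \<inter> S \<psi> \<noteq> {}}.
               measure_pmf.prob \<Omega> (up (S \<phi>) \<inter> up (S \<psi>)))"
  have J: "measure_pmf.prob \<Omega> {f. \<not> contains_clique {e. f e} s} \<le> exp (- \<mu> + \<Delta>)"
  proof -
    have "measure_pmf.prob \<Omega> {f. \<not> contains_clique {e. f e} s} \<le> measure_pmf.prob \<Omega> {f. \<forall>\<phi>\<in>I. f \<notin> up (S \<phi>)}"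
      by (rule measure_pmf.finite_measure_mono[OF sub1]) auto
    also have "\<dots> \<le> exp (- \<mu> + \<Delta>)"
      unfolding \<mu>_def \<Delta>_def \<Omega>_def by (rule janson_set[OF finE finI SE])
    finally show ?thesis .
  qed
  have Pup: "measure_pmf.prob \<Omega> (up (S \<phi>)) = \<rho> ^ c2" if "\<phi> \<in> I" for \<phi>
    unfolding \<Omega>_def using prob_up[OF finE SE[OF that] rho0] cardS[OF that] by simp
  have mu: "\<mu> = real (card I) * \<rho> ^ c2" unfolding \<mu>_def using Pup by simp
  have Dphi: "(\<Sum>\<psi>\<in>{\<psi>\<in>I. \<psi> \<noteq> \<phi> \<and> S \<phi> \<inter> S \<psi> \<noteq> {}}. measure_pmf.prob \<Omega> (up (S \<phi>) \<inter> up (S \<psi>)))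
      \<le> \<rho> ^ c2 / 3" if \<phi>: "\<phi> \<in> I" for \<phi>
  proof -
    let ?P = "measure_pmf.prob \<Omega>"
    define Q where "Q = {\<psi>\<in>I. \<psi> \<noteq> \<phi> \<and> S \<phi> \<inter> S \<psi> \<noteq> {}}"
    define Ag where "Ag = (\<lambda>\<psi>::nat \<Rightarrow> 'a. {i. i < s \<and> \<phi> i = \<psi> i})"
    define kk where "kk = (\<lambda>\<psi>. card (Ag \<psi>))"
    define g where "g = (\<lambda>k. \<rho> ^ (c2 - (k choose 2)))"
    have AgS: "Ag \<psi> \<subseteq> {..<s}" for \<psi> unfolding Ag_def by auto
    have finAg: "finite (Ag \<psi>)" for \<psi> unfolding Ag_def by simp
    have \<phi>I: "\<phi> \<in> PiE {..<s} (Yc Y col)" using \<phi> unfolding I_def .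
    have injphi: "inj_on \<phi> {..<s}" by (rule I_inj[OF \<phi>I])
    have inter: "S \<phi> \<inter> S \<psi> = prs \<phi> (Ag \<psi>)" if "\<psi> \<in> I" for \<psi>
      unfolding S_def Ag_def by (rule agree_int[OF \<phi>I]) (use that in \<open>simp add: I_def\<close>)
    have cardInt: "card (S \<phi> \<inter> S \<psi>) = kk \<psi> choose 2" if "\<psi> \<in> I" for \<psi>
      unfolding inter[OF that] kk_def by (rule card_prs[OF finAg inj_on_subset[OF injphi AgS]])
    have trm: "?P (up (S \<phi>) \<inter> up (S \<psi>)) = \<rho> ^ c2 * g (kk \<psi>)" if \<psi>: "\<psi> \<in> I" for \<psi>
    proof -
      have "up (S \<phi>) \<inter> up (S \<psi>) = up (S \<phi> \<union> S \<psi>)" unfolding up_def by auto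
      moreover have "?P (up (S \<phi> \<union> S \<psi>)) = \<rho> ^ card (S \<phi> \<union> S \<psi>)"
        unfolding \<Omega>_def by (rule prob_up[OF finE _ rho0]) (use SE \<phi> \<psi> in auto)
      moreover have "card (S \<phi> \<union> S \<psi>) = c2 + (c2 - (kk \<psi> choose 2))"
      proof -
        have u: "card (S \<phi>) + card (S \<psi>) = card (S \<phi> \<union> S \<psi>) + card (S \<phi> \<inter> S \<psi>)"
          by (rule card_Un_Int) (use finS \<phi> \<psi> in auto)
        have "card (S \<phi> \<inter> S \<psi>) \<le> card (S \<phi>)"
          by (rule card_mono) (use finS \<phi> in auto)
        thus ?thesis using u cardS[OF \<phi>] cardS[OF \<psi>] cardInt[OF \<psi>] by simp
      qed
      ultimately show ?thesis unfolding g_def by (simp add: power_add)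
    qed
    have kQ: "kk \<psi> \<in> {2..<s}" if \<psi>: "\<psi> \<in> Q" for \<psi>
    proof -
      have \<psi>I: "\<psi> \<in> I" and ne: "\<psi> \<noteq> \<phi>" and int: "S \<phi> \<inter> S \<psi> \<noteq> {}" using \<psi> unfolding Q_def by auto
      have "2 \<le> kk \<psi>" unfolding kk_def by (rule prs_ne) (use int inter[OF \<psi>I] finAg in auto)
      moreover have "Ag \<psi> \<noteq> {..<s}"
      proof
        assume "Ag \<psi> = {..<s}"
        hence "\<phi> = \<psi>" using \<phi>I \<psi>I unfolding I_def Ag_def by (intro PiE_ext[of \<phi> "{..<s}" "Yc Y col"]) auto
        with ne show False by simp
      qed
      hence "kk \<psi> < s" unfolding kk_def using psubset_card_mono[of "{..<s}" "Ag \<psi>"] AgS by fastforce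
      ultimately show ?thesis by simp
    qed
    have finQ: "finite Q" unfolding Q_def using finI by simp
    have cnt: "real (card {\<psi>\<in>Q. kk \<psi> = k}) \<le> real (s choose k) * (real n / real (s - k)) ^ (s - k)"
      if k: "k \<in> {2..<s}" for k
    proof -
      define \<A> where "\<A> = {A. A \<subseteq> {..<s} \<and> card A = k}"
      have finA: "finite \<A>" unfolding \<A>_def by (rule finite_subset[of _ "Pow {..<s}"]) auto
      have cardA: "card \<A> = s choose k" unfolding \<A>_def using n_subsets[of "{..<s}" k] by simp
      have sub: "{\<psi>\<in>Q. kk \<psi> = k} \<subseteq> (\<Union>A\<in>\<A>. {\<psi>\<in>PiE {..<s} (Yc Y col). \<forall>i\<in>A. \<psi> i = \<phi> i})"
      proof
        fix \<psi> assume "\<psi> \<in> {\<psi>\<in>Q. kk \<psi> = k}"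
        hence "\<psi> \<in> I" "kk \<psi> = k" unfolding Q_def by auto
        hence "Ag \<psi> \<in> \<A>" "\<psi> \<in> {\<psi>\<in>PiE {..<s} (Yc Y col). \<forall>i\<in>Ag \<psi>. \<psi> i = \<phi> i}"
          unfolding \<A>_def kk_def I_def Ag_def by auto
        thus "\<psi> \<in> (\<Union>A\<in>\<A>. {\<psi>\<in>PiE {..<s} (Yc Y col). \<forall>i\<in>A. \<psi> i = \<phi> i})" by blast
      qed
      have "card {\<psi>\<in>Q. kk \<psi> = k} \<le> card (\<Union>A\<in>\<A>. {\<psi>\<in>PiE {..<s} (Yc Y col). \<forall>i\<in>A. \<psi> i = \<phi> i})"
        by (rule card_mono[OF _ sub]) (use finA finI in \<open>auto simp: I_def\<close>)
      also have "\<dots> \<le> (\<Sum>A\<in>\<A>. card {\<psi>\<in>PiE {..<s} (Yc Y col). \<forall>i\<in>A. \<psi> i = \<phi> i})"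
        by (rule card_UN_le[OF finA])
      also have "\<dots> = (\<Sum>A\<in>\<A>. \<Prod>i\<in>{..<s} - A. y i)"
        by (intro sum.cong refl) (use card_fix[OF \<phi>I] in \<open>auto simp: \<A>_def y_def\<close>)
      finally have c1: "real (card {\<psi>\<in>Q. kk \<psi> = k}) \<le> (\<Sum>A\<in>\<A>. \<Prod>i\<in>{..<s} - A. real (y i))"
        by (metis (mono_tags, lifting) of_nat_le_iff of_nat_prod of_nat_sum sum.cong)
      also have "\<dots> \<le> (\<Sum>A\<in>\<A>. (real n / real (s - k)) ^ (s - k))"
      proof (rule sum_mono)
        fix A assume A: "A \<in> \<A>"
        have As: "A \<subseteq> {..<s}" "card A = k" using A unfolding \<A>_def by auto
        have fA: "finite A" using As(1) finite_subset by blast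
        have cB: "card ({..<s} - A) = s - k" using card_Diff_subset[OF fA As(1)] As(2) by simp
        have "(\<Sum>i\<in>{..<s} - A. y i) \<le> card Y" unfolding y_def by (rule sum_card_Yc[OF fY]) auto
        hence sB: "(\<Sum>i\<in>{..<s} - A. real (y i)) \<le> real n" using cY
          by (metis of_nat_le_iff of_nat_sum)
        show "(\<Prod>i\<in>{..<s} - A. real (y i)) \<le> (real n / real (s - k)) ^ (s - k)"
          by (rule amgm[OF _ cB _ _ sB]) (use k in auto)
      qed
      also have "\<dots> = real (s choose k) * (real n / real (s - k)) ^ (s - k)" using cardA by simp
      finally show ?thesis .
    qed
    have main: "real (s choose k) * (real n / real (s - k)) ^ (s - k) * g k \<le> (1/4) ^ (s - k)"
      if k: "k \<in> {2..<s}" for k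
    proof -
      define t where "t = s - k"
      have t1: "1 \<le> t" and ts: "t + 2 \<le> s" and kt: "k = s - t" using k unfolding t_def by auto
      have N: "real (s choose t) * (x ^ s / real t) ^ t * r ^ (t * (2 * s - t - 1)) \<le> (1/4) ^ t"
        by (rule N1[OF s3 t1 ts a0 a4 as x40 r_def])
      have b: "s choose k = s choose t" unfolding t_def using k by (intro binomial_symmetric) auto
      have "g k = r ^ (2 * (c2 - (k choose 2)))" unfolding g_def rho by (simp add: power_mult)
      also have "2 * (c2 - (k choose 2)) = t * (2 * s - t - 1)"
        unfolding c2_def t_def using choose_diff[of k s] k by simp
      finally have gk: "g k = r ^ (t * (2 * s - t - 1))" .
      show ?thesis using N unfolding b gk xs t_def[symmetric] .
    qed
    have g0: "g k \<ge> 0" for k unfolding g_def using rho0 by simp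
    have "(\<Sum>\<psi>\<in>Q. ?P (up (S \<phi>) \<inter> up (S \<psi>))) = (\<Sum>\<psi>\<in>Q. \<rho> ^ c2 * g (kk \<psi>))"
      by (intro sum.cong refl trm) (simp add: Q_def)
    also have "\<dots> = \<rho> ^ c2 * (\<Sum>\<psi>\<in>Q. g (kk \<psi>))" by (simp add: sum_distrib_left)
    also have "(\<Sum>\<psi>\<in>Q. g (kk \<psi>)) = (\<Sum>k\<in>{2..<s}. \<Sum>\<psi>\<in>{\<psi>. \<psi> \<in> Q \<and> kk \<psi> = k}. g (kk \<psi>))"
      by (rule sum.group[symmetric]) (use finQ kQ in auto)
    also have "\<dots> = (\<Sum>k\<in>{2..<s}. real (card {\<psi>\<in>Q. kk \<psi> = k}) * g k)"
      by (intro sum.cong refl) simp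
    also have "\<dots> \<le> (\<Sum>k\<in>{2..<s}. (1/4) ^ (s - k))"
    proof (rule sum_mono)
      fix k assume k: "k \<in> {2..<s}"
      have "real (card {\<psi>\<in>Q. kk \<psi> = k}) * g k \<le> real (s choose k) * (real n / real (s - k)) ^ (s - k) * g k"
        using cnt[OF k] g0 by (intro mult_right_mono) auto
      also have "\<dots> \<le> (1/4) ^ (s - k)" by (rule main[OF k])
      finally show "real (card {\<psi>\<in>Q. kk \<psi> = k}) * g k \<le> (1/4) ^ (s - k)" .
    qed
    also have "\<dots> \<le> 1/3" by (rule geo4)
    finally show ?thesis unfolding Q_def using rho0 by (simp add: mult_left_mono divide_simps)
  qed
  have Delta: "\<Delta> \<le> \<mu> / 3"
  proof -
    have "\<Delta> \<le> (\<Sum>\<phi>\<in>I. \<rho> ^ c2 / 3)" unfolding \<Delta>_def by (rule sum_mono) (rule Dphi)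
    thus ?thesis using mu by simp
  qed
  have mu_lb: "\<mu> \<ge> real n * 4 ^ (s - 1) / 2"
  proof -
    define a1 where "a1 = real n / (2 * real s)"
    have s0: "real s > 0" using s3 by simp
    have a1pos: "a1 > 0" unfolding a1_def using npos s0 by simp
    have cI: "real (card I) = (\<Prod>i<s. real (y i))"
      unfolding I_def y_def by (simp add: card_PiE)
    have ya: "real (y i) \<ge> a1" if "i < s" for i
      using big that unfolding y_def Yc_def a1_def by simp
    have sumy: "(\<Sum>i<s. real (y i)) = real n"
    proof -
      have "(\<Sum>i<s. y i) = n" unfolding y_def using sum_card_Yc_all[OF fY colY] cY by simp
      hence "real (\<Sum>i<s. y i) = real n" by simp
      thus ?thesis by simp
    qed
    have sumd: "(\<Sum>i<s. real (y i) - a1) = real n / 2"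
      using sumy s0 unfolding a1_def by (simp add: sum_subtractf)
    have "a1 * (\<Prod>i<s. a1 + (real (y i) - a1)) \<ge> a1 ^ (card {..<s} + 1) + a1 ^ card {..<s} * (\<Sum>i<s. real (y i) - a1)"
      by (rule prod_lower) (use a1pos ya in auto)
    hence "a1 * real (card I) \<ge> a1 ^ (s + 1) + a1 ^ s * (real n / 2)"
      using cI sumd by simp
    moreover have "a1 ^ (s + 1) \<ge> 0" using a1pos by simp
    moreover have "a1 ^ s = a1 * a1 ^ (s - 1)"
    proof -
      have "s = Suc (s - 1)" using s3 by simp
      hence "a1 ^ s = a1 ^ Suc (s - 1)" by (rule arg_cong)
      thus ?thesis by (simp only: power_Suc)
    qed
    ultimately have "a1 * real (card I) \<ge> a1 * (a1 ^ (s - 1) * (real n / 2))"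
      by (simp add: mult.assoc)
    hence cI2: "real (card I) \<ge> a1 ^ (s - 1) * (real n / 2)"
      using a1pos by simp
    have rs: "r ^ s = 8 * real s / real n" unfolding r_def using as xs by (simp add: power_divide)
    have "\<rho> ^ c2 = r ^ (2 * c2)" unfolding rho by (simp add: power_mult)
    also have "2 * c2 = s * (s - 1)" unfolding c2_def by (rule two_choose)
    also have "r ^ (s * (s - 1)) = (8 * real s / real n) ^ (s - 1)" by (simp add: power_mult rs)
    finally have rc: "\<rho> ^ c2 = (8 * real s / real n) ^ (s - 1)" .
    have "\<mu> \<ge> a1 ^ (s - 1) * (real n / 2) * (8 * real s / real n) ^ (s - 1)"
      unfolding mu rc using cI2 by (intro mult_right_mono) auto
    also have "a1 ^ (s - 1) * (real n / 2) * (8 * real s / real n) ^ (s - 1) = (a1 * (8 * real s / real n)) ^ (s - 1) * (real n / 2)"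
      by (simp only: power_mult_distrib mult.commute mult.left_commute)
    also have "a1 * (8 * real s / real n) = 4" unfolding a1_def using npos s0 by simp
    finally show ?thesis by (simp add: mult.commute)
  qed
  have "- \<mu> + \<Delta> \<le> - (2 powr (2 * real s - 4)) * real n"
  proof -
    have "2 powr (2 * real s - 4) = 2 ^ (2 * s - 4)"
      using s3 by (simp add: powr_realpow[symmetric] of_nat_diff)
    also have "(2::real) ^ (2 * s - 4) * 4 = 4 ^ (s - 1)"
    proof -
      have "(2::real) ^ (2 * s - 4) * 4 = 2 ^ (2 * s - 4 + 2)" by (simp add: power_add)
      also have "2 * s - 4 + 2 = 2 * (s - 1)" using s3 by simp
      finally show ?thesis by (simp add: power_mult)
    qed
    hence "2 ^ (2 * s - 4) = (4::real) ^ (s - 1) / 4" by simp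
    finally have P: "2 powr (2 * real s - 4) * real n = real n * 4 ^ (s - 1) / 4" by simp
    have D: "- \<mu> + \<Delta> \<le> - (2/3) * \<mu>" using Delta by simp
    have L:  "(2/3) * \<mu> \<ge> real n * 4 ^ (s - 1) / 4"
    proof -
      have "0 \<le> real n * 4 ^ (s - 1)" by simp
      thus ?thesis using mu_lb by linarith
    qed
    have "- (2 powr (2 * real s - 4)) * real n = - (2 powr (2 * real s - 4) * real n)" by simp
    thus ?thesis using P D L by linarith
  qed
  hence "exp (- \<mu> + \<Delta>) \<le> exp (- (2 powr (2 * real s - 4)) * real n)" by (simp only: exp_le_cancel_iff)
  with J have "measure_pmf.prob \<Omega> {f. \<not> contains_clique {e. f e} s} \<le> exp (- (2 powr (2 * real s - 4)) * real n)"
    by (rule order.trans)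
  thus ?thesis unfolding random_partite_graph_def \<Omega>_def E_def .
qed


end
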